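(* Let $P(q)=\sum_{j=0}^{n} q^{j}a_{j}$ be a slice regular polynomial of degree $n$ with quaternionic coefficients $a_j\in\mathbb H$, and let $P'(q)=\sum_{j=1}^{n} q^{j-1}ja_{j}$. Then $$\|P'\|\leq n\|P\|,$$ where $\|F\|=\max_{|q|\leq 1}|F(q)|$. Moreover, equality holds if and only if $P(q)=q^{n}a_{n}$ for some $a_{n}\in\mathbb H$.
   Context: $\mathbb H$ denotes the real algebra of quaternions with basis $1,i,j,k$, $i^2=j^2=k^2=ijk=-1$, and modulus $|q|=\sqrt{q\bar q}$. A slice regular polynomial is a function $\mathbb H\to\mathbb H$ of the form $q\mapsto\sum_{j=0}^n q^j a_j$ with coefficients written on the right; it has degree $n$ if $a_n\neq 0$. Its derivative is $P'(q)=\sum_{j=1}^n q^{j-1}ja_j$. *)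

theory Defs
  imports "HOL-Analysis.Analysis"
begin

text \<open>Real quaternions q = q1 + q2 i + q3 j + q4 k, with i^2=j^2=k^2=ijk=-1.\<close>

datatype quat = Quat (Re: real) (Im1: real) (Im2: real) (Im3: real)

definition qzero :: quat where "qzero = Quat 0 0 0 0"
definition qone :: quat where "qone = Quat 1 0 0 0"

definition qadd :: "quat \<Rightarrow> quat \<Rightarrow> quat" where
  "qadd p q = Quat (Re p + Re q) (Im1 p + Im1 q) (Im2 p + Im2 q) (Im3 p + Im3 q)"

definition qmult :: "quat \<Rightarrow> quat \<Rightarrow> quat" where
  "qmult p q = Quat
     (Re p * Re q - Im1 p * Im1 q - Im2 p * Im2 q - Im3 p * Im3 q)
     (Re p * Im1 q + Im1 p * Re q + Im2 p * Im3 q - Im3 p * Im2 q)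
     (Re p * Im2 q - Im1 p * Im3 q + Im2 p * Re q + Im3 p * Im1 q)
     (Re p * Im3 q + Im1 p * Im2 q - Im2 p * Im1 q + Im3 p * Re q)"

definition qscale :: "real \<Rightarrow> quat \<Rightarrow> quat" where
  "qscale r q = Quat (r * Re q) (r * Im1 q) (r * Im2 q) (r * Im3 q)"

definition qpow :: "quat \<Rightarrow> nat \<Rightarrow> quat" where
  "qpow q n = (qmult q ^^ n) qone"

definition qnorm :: "quat \<Rightarrow> real" where
  "qnorm q = sqrt ((Re q)^2 + (Im1 q)^2 + (Im2 q)^2 + (Im3 q)^2)"

definition qsum :: "(nat \<Rightarrow> quat) \<Rightarrow> nat set \<Rightarrow> quat" where
  "qsum f A = Quat (\<Sum>j\<in>A. Re (f j)) (\<Sum>j\<in>A. Im1 (f j)) (\<Sum>j\<in>A. Im2 (f j)) (\<Sum>j\<in>A. Im3 (f j))"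

definition spoly :: "(nat \<Rightarrow> quat) \<Rightarrow> nat \<Rightarrow> quat \<Rightarrow> quat" where
  "spoly a n q = qsum (\<lambda>j. qmult (qpow q j) (a j)) {0..n}"

definition spoly_deriv :: "(nat \<Rightarrow> quat) \<Rightarrow> nat \<Rightarrow> quat \<Rightarrow> quat" where
  "spoly_deriv a n q = qsum (\<lambda>j. qmult (qpow q (j - 1)) (qscale (real j) (a j))) {1..n}"

text \<open>Sup norm on the closed unit ball (a maximum for continuous F).\<close>
definition unit_ball_norm :: "(quat \<Rightarrow> quat) \<Rightarrow> real" where
  "unit_ball_norm F = (SUP q\<in>{q. qnorm q \<le> 1}. qnorm (F q))"

end

theory Submission
  imports Defs "HOL-Complex_Analysis.Complex_Analysis" "HOL-Computational_Algebra.Polynomial"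
begin

lemma quat_eqI: "Defs.Re p = Defs.Re q \<Longrightarrow> Im1 p = Im1 q \<Longrightarrow> Im2 p = Im2 q \<Longrightarrow> Im3 p = Im3 q \<Longrightarrow> p = q"
  by (cases p; cases q) auto

lemma quat_eq_iff: "p = q \<longleftrightarrow> Defs.Re p = Defs.Re q \<and> Im1 p = Im1 q \<and> Im2 p = Im2 q \<and> Im3 p = Im3 q"
  using quat_eqI by blast

instantiation quat :: ab_group_add
begin
definition "0 = qzero"
definition "p + q = qadd p q"
definition "- q = Quat (- Defs.Re q) (- Im1 q) (- Im2 q) (- Im3 q)"
definition "p - q = Quat (Defs.Re p - Defs.Re q) (Im1 p - Im1 q) (Im2 p - Im2 q) (Im3 p - Im3 q)"
instance by standard (auto simp: zero_quat_def plus_quat_def uminus_quat_def minus_quat_def qzero_def qadd_def quat_eq_iff)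
end

lemma quat_simps [simp]:
  "Defs.Re 0 = 0" "Im1 0 = 0" "Im2 0 = 0" "Im3 0 = 0"
  "Defs.Re (p + q) = Defs.Re p + Defs.Re q" "Im1 (p + q) = Im1 p + Im1 q" "Im2 (p + q) = Im2 p + Im2 q" "Im3 (p + q) = Im3 p + Im3 q"
  "Defs.Re (p - q) = Defs.Re p - Defs.Re q" "Im1 (p - q) = Im1 p - Im1 q" "Im2 (p - q) = Im2 p - Im2 q" "Im3 (p - q) = Im3 p - Im3 q"
  "Defs.Re (- q) = - Defs.Re q" "Im1 (- q) = - Im1 q" "Im2 (- q) = - Im2 q" "Im3 (- q) = - Im3 q"
  by (simp_all add: zero_quat_def plus_quat_def uminus_quat_def minus_quat_def qzero_def qadd_def)

instantiation quat :: real_vector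
begin
definition "scaleR r q = qscale r q"
instance by standard (auto simp: scaleR_quat_def qscale_def quat_eq_iff algebra_simps)
end

lemma quat_scaleR_simps [simp]:
  "Defs.Re (r *\<^sub>R q) = r * Defs.Re q" "Im1 (r *\<^sub>R q) = r * Im1 q" "Im2 (r *\<^sub>R q) = r * Im2 q" "Im3 (r *\<^sub>R q) = r * Im3 q"
  by (simp_all add: scaleR_quat_def qscale_def)

instantiation quat :: real_inner
begin
definition "inner p q = Defs.Re p * Defs.Re q + Im1 p * Im1 q + Im2 p * Im2 q + Im3 p * Im3 q"
definition "norm q = qnorm q"
definition "sgn x = x /\<^sub>R norm x" for x :: quat
definition "dist x y = norm (x - y)" for x y :: quat
definition [code del]: "(uniformity :: (quat \<times> quat) filter) = (INF e\<in>{0 <..}. principal {(x, y). dist x y < e})"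
definition [code del]: "open (U :: quat set) \<longleftrightarrow> (\<forall>x\<in>U. eventually (\<lambda>(x', y). x' = x \<longrightarrow> y \<in> U) uniformity)"
instance
proof
  fix x y z :: quat and r :: real and U :: "quat set"
  show "dist x y = norm (x - y)" by (simp add: dist_quat_def)
  show "sgn x = x /\<^sub>R norm x" by (simp add: sgn_quat_def)
  show "uniformity = (INF e\<in>{0 <..}. principal {(x, y::quat). dist x y < e})" by (simp add: uniformity_quat_def)
  show "open U = (\<forall>x\<in>U. \<forall>\<^sub>F (x', y) in uniformity. x' = x \<longrightarrow> y \<in> U)" by (simp add: open_quat_def)
  show "inner x y = inner y x" by (simp add: inner_quat_def algebra_simps)
  show "inner (x + y) z = inner x z + inner y z" by (simp add: inner_quat_def algebra_simps)
  show "inner (r *\<^sub>R x) y = r * inner x y" by (simp add: inner_quat_def algebra_simps)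
  show "0 \<le> inner x x" by (simp add: inner_quat_def)
  show "(inner x x = 0) = (x = 0)"
    by (auto simp add: inner_quat_def quat_eq_iff add_nonneg_eq_0_iff)
  show "norm x = sqrt (inner x x)" by (simp add: norm_quat_def qnorm_def inner_quat_def power2_eq_square)
qed
end

instantiation quat :: real_normed_div_algebra
begin
definition "1 = qone"
definition "p * q = qmult p q"
definition "inverse q = (1 / (norm q)^2) *\<^sub>R Quat (Defs.Re q) (- Im1 q) (- Im2 q) (- Im3 q)"
definition "p div q = p * inverse q" for p q :: quat

lemma quat_mult_simps [simp]:
  "Defs.Re 1 = 1" "Im1 1 = 0" "Im2 1 = 0" "Im3 1 = 0"
  "Defs.Re (p * q) = Defs.Re p * Defs.Re q - Im1 p * Im1 q - Im2 p * Im2 q - Im3 p * Im3 q"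
  "Im1 (p * q) = Defs.Re p * Im1 q + Im1 p * Defs.Re q + Im2 p * Im3 q - Im3 p * Im2 q"
  "Im2 (p * q) = Defs.Re p * Im2 q - Im1 p * Im3 q + Im2 p * Defs.Re q + Im3 p * Im1 q"
  "Im3 (p * q) = Defs.Re p * Im3 q + Im1 p * Im2 q - Im2 p * Im1 q + Im3 p * Defs.Re q"
  by (simp_all add: one_quat_def times_quat_def qone_def qmult_def)

lemma quat_norm_sq: "(norm q)^2 = (Defs.Re q)^2 + (Im1 q)^2 + (Im2 q)^2 + (Im3 q)^2"
  by (simp add: norm_quat_def qnorm_def)

instance
proof
  fix x y z :: quat and a :: real
  show "x * y * z = x * (y * z)" by (simp add: quat_eq_iff algebra_simps)
  show "(x + y) * z = x * z + y * z" by (simp add: quat_eq_iff algebra_simps)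
  show "x * (y + z) = x * y + x * z" by (simp add: quat_eq_iff algebra_simps)
  show "a *\<^sub>R x * y = a *\<^sub>R (x * y)" by (simp add: quat_eq_iff algebra_simps)
  show "x * a *\<^sub>R y = a *\<^sub>R (x * y)" by (simp add: quat_eq_iff algebra_simps)
  show "1 * x = x" by (simp add: quat_eq_iff)
  show "x * 1 = x" by (simp add: quat_eq_iff)
  show "(0::quat) \<noteq> 1" by (simp add: quat_eq_iff)
  show "x div y = x * inverse y" by (simp add: divide_quat_def)
  show "inverse (0::quat) = 0" by (simp add: inverse_quat_def quat_eq_iff)
  show "x \<noteq> 0 \<Longrightarrow> inverse x * x = 1"
  proof -
    assume "x \<noteq> 0"
    then have N: "(Defs.Re x)^2 + (Im1 x)^2 + (Im2 x)^2 + (Im3 x)^2 \<noteq> 0" by (simp flip: quat_norm_sq)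
    show ?thesis unfolding inverse_quat_def quat_eq_iff quat_norm_sq using N
      by (simp add: divide_simps) (simp add: power2_eq_square algebra_simps)
  qed
  show "x \<noteq> 0 \<Longrightarrow> x * inverse x = 1"
  proof -
    assume "x \<noteq> 0"
    then have N: "(Defs.Re x)^2 + (Im1 x)^2 + (Im2 x)^2 + (Im3 x)^2 \<noteq> 0" by (simp flip: quat_norm_sq)
    show ?thesis unfolding inverse_quat_def quat_eq_iff quat_norm_sq using N
      by (simp add: divide_simps) (simp add: power2_eq_square algebra_simps)
  qed
  show "norm (x * y) = norm x * norm y"
  proof -
    have "(norm (x*y))^2 = ((norm x) * (norm y))^2"
      unfolding power_mult_distrib quat_norm_sq by (simp add: power2_eq_square algebra_simps)
    then show ?thesis by (simp add: power2_eq_iff_nonneg)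
  qed
qed
end

definition wn :: "nat \<Rightarrow> nat \<Rightarrow> complex" where
  "wn n k = cis (pi * (2 * real k + 1) / real n)"
definition rho :: "nat \<Rightarrow> nat \<Rightarrow> real" where
  "rho n k = 1 / (real n * (1 - cos (pi * (2 * real k + 1) / real n)))"

lemma wn_pow_n: assumes "n \<ge> 1" shows "wn n k ^ n = -1"
proof -
  have e: "real n * (pi * (2 * real k + 1) / real n) = pi * (2 * real k + 1)" using assms by simp
  have "wn n k ^ n = cis (real n * (pi * (2 * real k + 1) / real n))"
    unfolding wn_def by (rule Complex.DeMoivre)
  also have "\<dots> = cis (pi * (2 * real k + 1))" by (simp only: e)
  also have "pi * (2 * real k + 1) = 2 * pi * real k + pi" by (simp add: algebra_simps)
  also have "cis (2 * pi * real k + pi) = cis (2 * pi * real k) * cis pi" by (rule cis_mult[symmetric])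
  also have "\<dots> = -1" by (simp add: Ints_of_nat)
  finally show ?thesis .
qed

lemma cos_wn_less: assumes "n \<ge> 1" shows "cos (pi * (2 * real k + 1) / real n) < 1"
proof -
  have "cos (pi * (2 * real k + 1) / real n) \<noteq> 1"
  proof
    assume "cos (pi * (2 * real k + 1) / real n) = 1"
    then obtain m :: int where m: "pi * (2 * real k + 1) / real n = m * 2 * pi"
      by (auto simp: cos_one_2pi_int)
    then have "pi * (2 * real k + 1) = pi * (m * 2 * real n)" using assms by (simp add: field_simps)
    then have "2 * real k + 1 = m * 2 * real n" by simp
    then have "real_of_int (2 * int k + 1) = real_of_int (m * 2 * int n)" by simp
    then have "2 * int k + 1 = m * 2 * int n" by linarith
    then have "2 * int k + 1 = 2 * (m * int n)" by simp
    moreover have "\<And>a b::int. 2 * a + 1 = 2 * b \<Longrightarrow> False" by presburger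
    ultimately show False by blast
  qed
  then show ?thesis using cos_le_one[of "pi * (2 * real k + 1) / real n"] by linarith
qed

lemma rho_pos: assumes "n \<ge> 1" shows "rho n k > 0"
  using cos_wn_less[OF assms, of k] assms unfolding rho_def by simp

lemma wn_ne_1: assumes "n \<ge> 1" shows "wn n k \<noteq> 1"
proof
  assume "wn n k = 1"
  then have "Complex.Re (wn n k) = 1" by simp
  then have "cos (pi * (2 * real k + 1) / real n) = 1" unfolding wn_def by simp
  with cos_wn_less[OF assms, of k] show False by simp
qed

lemma rho_eq: assumes "n \<ge> 1"
  shows "complex_of_real (rho n k) = -2 * wn n k / (of_nat n * (1 - wn n k)^2)"
proof -
  define t where "t = pi * (2 * real k + 1) / real n"
  have w: "wn n k = Complex (cos t) (sin t)" unfolding wn_def t_def by (simp add: cis.ctr)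
  have ne: "(1 - wn n k) \<noteq> 0" using wn_ne_1[OF assms] by simp
  have c1: "1 - cos t \<noteq> 0" using cos_wn_less[OF assms, of k] unfolding t_def by simp
  have key: "wn n k ^ 2 + 1 = 2 * wn n k * complex_of_real (cos t)"
    unfolding w by (simp add: complex_eq_iff power2_eq_square algebra_simps)
  have "(1 - wn n k)^2 = (wn n k ^ 2 + 1) - 2 * wn n k" by (simp add: power2_eq_square algebra_simps)
  also have "\<dots> = -2 * wn n k * (1 - complex_of_real (cos t))" unfolding key by (simp add: algebra_simps)
  finally have sq: "(1 - wn n k)^2 = -2 * wn n k * (1 - complex_of_real (cos t))" .
  have w0: "wn n k \<noteq> 0" unfolding wn_def by simp
  have c1': "1 - complex_of_real (cos t) \<noteq> 0" using c1
    by (metis of_real_1 of_real_diff of_real_eq_0_iff)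
  show ?thesis unfolding rho_def t_def[symmetric] sq using w0 c1' assms
    by (simp add: field_simps)
qed

lemma wn_sum_pow_0:
  assumes "0 < t" "t < n"
  shows "(\<Sum>k<n. wn n k ^ t) = 0"
proof -
  define x where "x = cis (2 * pi * real t / real n)"
  have n0: "real n > 0" using assms by simp
  have pw: "wn n k ^ t = cis (pi * real t / real n) * x ^ k" for k
  proof -
    have "wn n k ^ t = cis (real t * (pi * (2 * real k + 1) / real n))"
      unfolding wn_def by (rule Complex.DeMoivre)
    also have "x ^ k = cis (real k * (2 * pi * real t / real n))"
      unfolding x_def by (rule Complex.DeMoivre)
    moreover have "real t * (pi * (2 * real k + 1) / real n) = pi * real t / real n + real k * (2 * pi * real t / real n)"
      using n0 by (simp add: field_simps)
    ultimately show ?thesis by (simp add: cis_mult)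
  qed
  have xn: "x ^ n = 1"
  proof -
    have "x ^ n = cis (real n * (2 * pi * real t / real n))"
      unfolding x_def by (rule Complex.DeMoivre)
    also have "real n * (2 * pi * real t / real n) = 2 * pi * real t" using n0 by simp
    finally show ?thesis by (simp add: Ints_of_nat)
  qed
  have x1: "x \<noteq> 1"
  proof
    assume "x = 1"
    then have "Complex.Re x = 1" by simp
    then have "cos (2 * pi * real t / real n) = 1" unfolding x_def by simp
    then obtain m :: int where m: "2 * pi * real t / real n = m * 2 * pi"
      by (auto simp: cos_one_2pi_int)
    then have "2 * pi * real t = 2 * pi * (m * real n)" using n0 by (simp add: field_simps)
    then have "real t = m * real n" by simp
    then have tm: "int t = m * int n" by (metis of_int_eq_iff of_int_mult of_int_of_nat_eq)
    show False
    proof (cases "m \<le> 0")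
      case True
      then have "m * int n \<le> 0" by (simp add: mult_nonpos_nonneg)
      then show False using tm assms by simp
    next
      case False
      then have a: "m * int n \<ge> 1 * int n" by (intro mult_right_mono) auto
      have "int t < int n" using assms by simp
      then show False using tm a by linarith
    qed
  qed
  have "(\<Sum>k<n. wn n k ^ t) = cis (pi * real t / real n) * (\<Sum>k<n. x ^ k)"
    by (simp add: pw sum_distrib_left)
  also have "(\<Sum>k<n. x ^ k) = 0" using geometric_sum[OF x1, of n] xn by simp
  finally show ?thesis by simp
qed

definition UU :: "nat \<Rightarrow> nat \<Rightarrow> complex" where
  "UU n j = (\<Sum>k<n. wn n k ^ (j+1) * (1 / (1 - wn n k)))"
definition SS :: "nat \<Rightarrow> nat \<Rightarrow> complex" where
  "SS n j = (\<Sum>k<n. wn n k ^ (j+1) * (1 / (1 - wn n k))^2)"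

lemma A_eq: assumes "n \<ge> 1" shows "1 / (1 - wn n k) = (\<Sum>m<n. wn n k ^ m) / 2"
proof -
  have "(\<Sum>m<n. wn n k ^ m) = (wn n k ^ n - 1) / (wn n k - 1)"
    by (rule geometric_sum[OF wn_ne_1[OF assms]])
  also have "\<dots> = 2 / (1 - wn n k)" unfolding wn_pow_n[OF assms]
    using wn_ne_1[OF assms, of k] by (simp add: field_simps)
  finally show ?thesis using wn_ne_1[OF assms, of k] by (simp add: field_simps)
qed

lemma sum_pows: assumes "n \<ge> 1" shows "(\<Sum>m<n. \<Sum>k<n. wn n k ^ m) = of_nat n"
proof -
  have "(\<Sum>m<n. \<Sum>k<n. wn n k ^ m) = (\<Sum>m<n. if m = 0 then of_nat n else 0)"
    by (rule sum.cong) (auto simp: wn_sum_pow_0)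
  also have "\<dots> = of_nat n" using assms by (simp add: sum.delta)
  finally show ?thesis .
qed

lemma UU_last: assumes "n \<ge> 1" shows "UU n (n - 1) = - of_nat n / 2"
proof -
  have "UU n (n - 1) = (\<Sum>k<n. - ((\<Sum>m<n. wn n k ^ m) / 2))"
    unfolding UU_def using assms by (simp add: wn_pow_n A_eq)
  also have "\<dots> = - (\<Sum>k<n. \<Sum>m<n. wn n k ^ m) / 2"
    by (simp add: sum_negf sum_divide_distrib[symmetric])
  also have "\<dots> = - (\<Sum>m<n. \<Sum>k<n. wn n k ^ m) / 2"
    by (subst sum.swap) (rule refl)
  also have "\<dots> = - of_nat n / 2" using sum_pows[OF assms] by simp
  finally show ?thesis .
qed

lemma UU_step: assumes "n \<ge> 1" shows "UU n j = UU n (Suc j) + (\<Sum>k<n. wn n k ^ (j+1))"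
proof -
  have "wn n k ^ (j+1) * (1 / (1 - wn n k)) = wn n k ^ (Suc j+1) * (1 / (1 - wn n k)) + wn n k ^ (j+1)" for k
  proof -
    have ne: "1 - wn n k \<noteq> 0" using wn_ne_1[OF assms] by simp
    show ?thesis using ne by (simp add: field_simps)
  qed
  then show ?thesis unfolding UU_def by (simp add: sum.distrib)
qed

lemma UU_val: assumes "n \<ge> 1" "j < n" shows "UU n j = - of_nat n / 2"
proof -
  have "\<forall>j. n - 1 - j = d \<longrightarrow> j < n \<longrightarrow> UU n j = - of_nat n / 2" for d
  proof (induction d)
    case 0
    show ?case
    proof (intro allI impI)
      fix j assume "n - 1 - j = 0" "j < n"
      then have "j = n - 1" by simp
      then show "UU n j = - of_nat n / 2" using UU_last[OF assms(1)] by simp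
    qed
  next
    case (Suc d)
    show ?case
    proof (intro allI impI)
      fix j assume h: "n - 1 - j = Suc d" "j < n"
      then have "UU n (Suc j) = - of_nat n / 2" using Suc.IH by auto
      moreover have "(\<Sum>k<n. wn n k ^ (j+1)) = 0" using h by (intro wn_sum_pow_0) auto
      ultimately show "UU n j = - of_nat n / 2" using UU_step[OF assms(1), of j] by simp
    qed
  qed
  then show ?thesis using assms by blast
qed

lemma SS_step: assumes "n \<ge> 1" shows "SS n j = SS n (Suc j) + UU n j"
proof -
  have "wn n k ^ (j+1) * (1 / (1 - wn n k))^2 = wn n k ^ (Suc j+1) * (1 / (1 - wn n k))^2 + wn n k ^ (j+1) * (1 / (1 - wn n k))" for k
  proof -
    have ne: "1 - wn n k \<noteq> 0" using wn_ne_1[OF assms] by simp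
    define a where "a = 1 / (1 - wn n k)"
    have h: "(1 - wn n k) * a = 1" unfolding a_def using ne by simp
    have "wn n k ^ (Suc j+1) * a^2 + wn n k ^ (j+1) * a = wn n k ^ (j+1) * a * (wn n k * a + 1)"
      by (simp add: algebra_simps power2_eq_square)
    also have "\<dots> = wn n k ^ (j+1) * a * (wn n k * a + (1 - wn n k) * a)"
      by (simp only: h)
    also have "\<dots> = wn n k ^ (j+1) * a^2" by (simp add: algebra_simps power2_eq_square)
    finally show ?thesis unfolding a_def by simp
  qed
  then show ?thesis unfolding UU_def SS_def by (simp add: sum.distrib)
qed

lemma SS_lin: assumes "n \<ge> 1" "j \<le> n" shows "SS n j = SS n 0 + of_nat j * of_nat n / 2"
  using assms(2)
proof (induction j)
  case 0 then show ?case by simp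
next
  case (Suc j)
  have "SS n (Suc j) = SS n j - UU n j" using SS_step[OF assms(1), of j] by (metis add_diff_cancel_right')
  also have "\<dots> = SS n j + of_nat n / 2" using UU_val[OF assms(1)] Suc.prems by simp
  finally show ?case using Suc by (simp add: field_simps)
qed

lemma SS_n: assumes "n \<ge> 1" shows "SS n n = - SS n 0"
proof -
  have "wn n k ^ (n+1) = - wn n k" for k using wn_pow_n[OF assms, of k] by simp
  then show ?thesis unfolding SS_def by (simp add: sum_negf)
qed

lemma SS_val: assumes "n \<ge> 1" "j \<le> n" shows "SS n j = of_nat n * (2 * of_nat j - of_nat n) / 4"
proof -
  have e: "- SS n 0 = SS n 0 + of_nat n * of_nat n / 2" using SS_lin[OF assms(1) order_refl] SS_n[OF assms(1)]
    by simp
  have "SS n 0 = - (of_nat n * of_nat n) / 4"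
  proof -
    have "SS n 0 = (SS n 0 - (- SS n 0)) / 2" by simp
    also have "\<dots> = - (of_nat n * of_nat n / 2) / 2" unfolding e by simp
    finally show ?thesis by simp
  qed
  then show ?thesis unfolding SS_lin[OF assms] by (simp add: field_simps)
qed

lemma interp_ident: assumes "n \<ge> 1" "j \<le> n"
  shows "(\<Sum>k<n. complex_of_real (rho n k) * wn n k ^ j) = of_nat n / 2 - of_nat j"
proof -
  have "complex_of_real (rho n k) * wn n k ^ j = (-2 / of_nat n) * (wn n k ^ (j+1) * (1 / (1 - wn n k))^2)" for k
    unfolding rho_eq[OF assms(1)] using assms(1) by (simp add: field_simps power2_eq_square)
  then have "(\<Sum>k<n. complex_of_real (rho n k) * wn n k ^ j) = (-2 / of_nat n) * SS n j"
    unfolding SS_def by (simp add: sum_distrib_left)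
  also have "\<dots> = of_nat n / 2 - of_nat j" unfolding SS_val[OF assms] using assms(1)
    by (simp add: field_simps)
  finally show ?thesis .
qed

lemma rho_sum: assumes "n \<ge> 1" shows "(\<Sum>k<n. rho n k) = real n / 2"
proof -
  have "complex_of_real (\<Sum>k<n. rho n k) = complex_of_real (real n / 2)"
    using interp_ident[OF assms, of 0] by simp
  then show ?thesis using of_real_eq_iff by blast
qed

lemma wn_inj: assumes "n \<ge> 1" "k < n" "l < n" "wn n k = wn n l" shows "k = l"
proof (rule ccontr)
  assume kl: "k \<noteq> l"
  have n0: "real n > 0" using assms by simp
  have "cis (pi * (2 * real k + 1) / real n - pi * (2 * real l + 1) / real n) = wn n k / wn n l"
    unfolding wn_def by (simp add: cis_divide)
  also have "\<dots> = 1" using assms(4) unfolding wn_def by simp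
  finally have "Complex.Re (cis (pi * (2 * real k + 1) / real n - pi * (2 * real l + 1) / real n)) = 1" by simp
  then have "cos (pi * (2 * real k + 1) / real n - pi * (2 * real l + 1) / real n) = 1" by simp
  then obtain m :: int where m: "pi * (2 * real k + 1) / real n - pi * (2 * real l + 1) / real n = m * 2 * pi"
    by (auto simp: cos_one_2pi_int)
  have e1: "pi * (2 * real k + 1) / real n - pi * (2 * real l + 1) / real n = 2 * pi * ((real k - real l) / real n)"
    using n0 by (simp add: field_simps)
  have "2 * pi * ((real k - real l) / real n) = 2 * pi * m" using m unfolding e1 by simp
  then have "(real k - real l) / real n = m" by (subst (asm) mult_cancel_left) simp
  then have "real k - real l = m * real n" using n0 by (simp add: field_simps)
  then have tm: "int k - int l = m * int n" by (metis of_int_eq_iff of_int_mult of_int_of_nat_eq of_int_diff)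
  have b1: "int k - int l < int n" "int l - int k < int n" using assms by auto
  show False
  proof (cases "m = 0")
    case True then show False using tm kl by simp
  next
    case False
    then consider "m \<ge> 1" | "m \<le> -1" by linarith
    then show False
    proof cases
      case 1
      then have a: "m * int n \<ge> 1 * int n" by (intro mult_right_mono) auto
      then show False using tm b1 by linarith
    next
      case 2
      then have a: "m * int n \<le> (-1) * int n" by (intro mult_right_mono) auto
      then show False using tm b1 by linarith
    qed
  qed
qed

lemma coeffs_zero:
  fixes c :: "nat \<Rightarrow> complex"
  assumes "finite A" "card A > n" "\<And>z. z \<in> A \<Longrightarrow> (\<Sum>j\<le>n. c j * z ^ j) = 0"
  shows "\<And>j. j \<le> n \<Longrightarrow> c j = 0"
proof -
  define p where "p = (\<Sum>j\<le>n. monom (c j) j)"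
  have pz: "poly p z = (\<Sum>j\<le>n. c j * z ^ j)" for z
    unfolding p_def by (simp add: poly_sum poly_monom)
  have dp: "degree p \<le> n" unfolding p_def
    by (rule degree_sum_le) (auto intro: order.trans[OF degree_monom_le])
  have "p = 0"
  proof (rule ccontr)
    assume "p \<noteq> 0"
    then have "card {x. poly p x = 0} \<le> degree p" by (rule card_poly_roots_bound)
    moreover have "card A \<le> card {x. poly p x = 0}"
      using \<open>p \<noteq> 0\<close> assms by (intro card_mono poly_roots_finite) (auto simp: pz)
    ultimately show False using dp assms(2) by linarith
  qed
  fix j assume "j \<le> n"
  have "coeff p j = c j" unfolding p_def using \<open>j \<le> n\<close> by (simp add: coeff_sum coeff_monom)
  then show "c j = 0" using \<open>p = 0\<close> by simp
qed

lemma qmult_eq: "qmult p q = p * q" by (simp add: times_quat_def)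
lemma qzero_eq: "qzero = 0" by (simp add: zero_quat_def)
lemma qone_eq: "qone = 1" by (simp add: one_quat_def)
lemma qscale_eq: "qscale r q = r *\<^sub>R q" by (simp add: scaleR_quat_def)
lemma qnorm_eq: "qnorm q = norm q" by (simp add: norm_quat_def)
lemma qpow_eq: "qpow q n = q ^ n"
proof -
  have "(qmult q ^^ n) qone = q ^ n" by (induct n) (simp_all add: qmult_eq qone_eq)
  then show ?thesis by (simp add: qpow_def)
qed

lemma quat_sum_comps:
  "Defs.Re (sum f A) = (\<Sum>j\<in>A. Defs.Re (f j))" "Im1 (sum f A) = (\<Sum>j\<in>A. Im1 (f j))"
  "Im2 (sum f A) = (\<Sum>j\<in>A. Im2 (f j))" "Im3 (sum f A) = (\<Sum>j\<in>A. Im3 (f j))"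
  by (induct A rule: infinite_finite_induct, simp_all)+

lemma qsum_eq: "qsum f A = sum f A"
  by (rule quat_eqI) (simp_all add: qsum_def quat_sum_comps)

lemma spoly_eq: "spoly a n q = (\<Sum>j\<in>{0..n}. q ^ j * a j)"
  by (simp add: spoly_def qsum_eq qmult_eq qpow_eq)
lemma spoly_deriv_eq: "spoly_deriv a n q = (\<Sum>j\<in>{1..n}. q ^ (j - 1) * (real j *\<^sub>R a j))"
  by (simp add: spoly_deriv_def qsum_eq qmult_eq qpow_eq qscale_eq)
lemma ubn_eq: "unit_ball_norm F = (SUP q\<in>{q. norm q \<le> 1}. norm (F q))"
  by (simp add: unit_ball_norm_def qnorm_eq)

definition sl :: "complex \<Rightarrow> quat" where "sl z = Quat (Complex.Re z) (Complex.Im z) 0 0"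
definition c1 :: "quat \<Rightarrow> complex" where "c1 q = Complex (Defs.Re q) (Im1 q)"
definition c2 :: "quat \<Rightarrow> complex" where "c2 q = Complex (Im2 q) (Im3 q)"

lemma sl_simps [simp]:
  "Defs.Re (sl z) = Complex.Re z" "Im1 (sl z) = Complex.Im z" "Im2 (sl z) = 0" "Im3 (sl z) = 0"
  by (simp_all add: sl_def)

lemma sl_mult: "sl (z * w) = sl z * sl w" by (rule quat_eqI) simp_all
lemma sl_add: "sl (z + w) = sl z + sl w" by (rule quat_eqI) simp_all
lemma sl_diff: "sl (z - w) = sl z - sl w" by (rule quat_eqI) simp_all
lemma sl_0 [simp]: "sl 0 = 0" by (rule quat_eqI) simp_all
lemma sl_1 [simp]: "sl 1 = 1" by (rule quat_eqI) simp_all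
lemma sl_of_real_mult: "sl (complex_of_real r * z) = r *\<^sub>R sl z" by (rule quat_eqI) simp_all
lemma sl_of_real: "sl (complex_of_real r) = r *\<^sub>R 1" by (rule quat_eqI) simp_all
lemma sl_pow: "sl (z ^ j) = sl z ^ j" by (induct j) (simp_all add: sl_mult)
lemma sl_sum: "sl (sum f A) = (\<Sum>x\<in>A. sl (f x))"
  by (induct A rule: infinite_finite_induct) (simp_all add: sl_add)
lemma norm_sl [simp]: "norm (sl z) = cmod z"
  by (simp add: norm_quat_def qnorm_def cmod_def)

lemma c1_simps [simp]: "Complex.Re (c1 q) = Defs.Re q" "Complex.Im (c1 q) = Im1 q" by (simp_all add: c1_def)
lemma c2_simps [simp]: "Complex.Re (c2 q) = Im2 q" "Complex.Im (c2 q) = Im3 q" by (simp_all add: c2_def)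

lemma c1_slmult: "c1 (sl z * q) = z * c1 q" by (simp add: complex_eq_iff)
lemma c2_slmult: "c2 (sl z * q) = z * c2 q" by (simp add: complex_eq_iff)
lemma c1_add: "c1 (p + q) = c1 p + c1 q" by (simp add: complex_eq_iff)
lemma c2_add: "c2 (p + q) = c2 p + c2 q" by (simp add: complex_eq_iff)
lemma c1_scaleR: "c1 (r *\<^sub>R q) = complex_of_real r * c1 q" by (simp add: complex_eq_iff)
lemma c2_scaleR: "c2 (r *\<^sub>R q) = complex_of_real r * c2 q" by (simp add: complex_eq_iff)
lemma c1_sum: "c1 (sum f A) = (\<Sum>x\<in>A. c1 (f x))"
  by (simp add: complex_eq_iff quat_sum_comps)
lemma c2_sum: "c2 (sum f A) = (\<Sum>x\<in>A. c2 (f x))"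
  by (simp add: complex_eq_iff quat_sum_comps)
lemma c1_sl [simp]: "c1 (sl z) = z" by (simp add: complex_eq_iff)
lemma c2_sl [simp]: "c2 (sl z) = 0" by (simp add: complex_eq_iff)
lemma c12_zero: "c1 q = 0 \<Longrightarrow> c2 q = 0 \<Longrightarrow> q = 0"
  by (rule quat_eqI) (simp_all add: complex_eq_iff)
lemma norm_c12: "norm q = sqrt ((cmod (c1 q))^2 + (cmod (c2 q))^2)"
  by (simp add: norm_quat_def qnorm_def cmod_def add.assoc)

lemma sl_commute: "sl z * sl w = sl w * sl z"
  by (metis mult.commute sl_mult)

lemma interp_quat:
  assumes n: "n \<ge> 1"
  shows "sl z * spoly_deriv a n (sl z)
       = (real n / 2) *\<^sub>R spoly a n (sl z) - (\<Sum>k<n. rho n k *\<^sub>R spoly a n (sl (z * wn n k)))"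
proof -
  have L: "sl z * spoly_deriv a n (sl z) = (\<Sum>j\<in>{0..n}. real j *\<^sub>R (sl (z ^ j) * a j))"
  proof -
    have "sl z * spoly_deriv a n (sl z) = (\<Sum>j\<in>{1..n}. real j *\<^sub>R (sl (z ^ j) * a j))"
      unfolding spoly_deriv_eq sum_distrib_left
    proof (rule sum.cong[OF refl])
      fix j assume "j \<in> {1..n}"
      then have "z * z ^ (j - 1) = z ^ j" by (cases j) auto
      then have "sl z * sl z ^ (j - 1) = sl (z ^ j)" by (metis sl_mult sl_pow)
      then show "sl z * (sl z ^ (j - 1) * (real j *\<^sub>R a j)) = real j *\<^sub>R (sl (z ^ j) * a j)"
        by (metis mult.assoc mult_scaleR_right)
    qed
    also have "\<dots> = (\<Sum>j\<in>{0..n}. real j *\<^sub>R (sl (z ^ j) * a j))"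
      by (simp add: sum.atLeast_Suc_atMost[of 0 n])
    finally show ?thesis .
  qed
  have tmq: "(real n / 2) *\<^sub>R (sl (z ^ j) * a j) - (\<Sum>k<n. rho n k *\<^sub>R (sl ((z * wn n k) ^ j) * a j))
        = real j *\<^sub>R (sl (z ^ j) * a j)" if "j \<in> {0..n}" for j
  proof -
    have "(\<Sum>k<n. rho n k *\<^sub>R (sl ((z * wn n k) ^ j) * a j))
        = sl (\<Sum>k<n. complex_of_real (rho n k) * (z ^ j * wn n k ^ j)) * a j"
      by (simp add: sl_sum sum_distrib_right sl_of_real_mult power_mult_distrib)
    also have "(\<Sum>k<n. complex_of_real (rho n k) * (z ^ j * wn n k ^ j))
        = z ^ j * (\<Sum>k<n. complex_of_real (rho n k) * wn n k ^ j)"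
      by (simp add: sum_distrib_left algebra_simps)
    also have "\<dots> = z ^ j * (of_nat n / 2 - of_nat j)"
      using interp_ident[OF n, of j] that by simp
    finally have e: "(\<Sum>k<n. rho n k *\<^sub>R (sl ((z * wn n k) ^ j) * a j)) = sl (z ^ j * (of_nat n / 2 - of_nat j)) * a j" .
    have e2: "sl (z ^ j * (of_nat n / 2 - of_nat j)) = (real n / 2) *\<^sub>R sl (z ^ j) - real j *\<^sub>R sl (z ^ j)"
    proof -
      have "z ^ j * (of_nat n / 2 - of_nat j) = complex_of_real (real n / 2) * z ^ j - complex_of_real (real j) * z ^ j"
        by (simp add: algebra_simps)
      then show ?thesis by (simp only: sl_diff sl_of_real_mult)
    qed
    show ?thesis unfolding e e2 by (simp add: algebra_simps)
  qed
  have "(real n / 2) *\<^sub>R spoly a n (sl z) - (\<Sum>k<n. rho n k *\<^sub>R spoly a n (sl (z * wn n k)))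
      = (\<Sum>j\<in>{0..n}. (real n / 2) *\<^sub>R (sl (z ^ j) * a j)) - (\<Sum>j\<in>{0..n}. \<Sum>k<n. rho n k *\<^sub>R (sl ((z * wn n k) ^ j) * a j))"
    unfolding spoly_eq scaleR_sum_right sl_pow by (subst sum.swap) (rule refl)
  also have "\<dots> = (\<Sum>j\<in>{0..n}. real j *\<^sub>R (sl (z ^ j) * a j))"
    unfolding sum_subtractf[symmetric] by (rule sum.cong[OF refl]) (rule tmq)
  finally show ?thesis using L by simp
qed

lemma bound_boundary:
  assumes n: "n \<ge> 1" and z: "cmod z = 1"
    and M: "\<And>v. cmod v \<le> 1 \<Longrightarrow> norm (spoly a n (sl v)) \<le> M"
  shows "norm (spoly_deriv a n (sl z)) \<le> real n * M"
proof -
  have "norm (spoly_deriv a n (sl z)) = norm (sl z * spoly_deriv a n (sl z))"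
    by (simp add: norm_mult z)
  also have "\<dots> \<le> norm ((real n / 2) *\<^sub>R spoly a n (sl z)) + norm (\<Sum>k<n. rho n k *\<^sub>R spoly a n (sl (z * wn n k)))"
    unfolding interp_quat[OF n] by (rule norm_triangle_ineq4)
  also have "norm ((real n / 2) *\<^sub>R spoly a n (sl z)) \<le> (real n / 2) * M"
    using M[of z] z by (simp add: mult_left_mono)
  also have "norm (\<Sum>k<n. rho n k *\<^sub>R spoly a n (sl (z * wn n k))) \<le> (\<Sum>k<n. rho n k * M)"
  proof (rule order.trans[OF norm_sum sum_mono])
    fix k assume "k \<in> {..<n}"
    have "cmod (z * wn n k) = 1" using z by (simp add: norm_mult wn_def)
    then show "norm (rho n k *\<^sub>R spoly a n (sl (z * wn n k))) \<le> rho n k * M"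
      using M[of "z * wn n k"] rho_pos[OF n, of k] by (simp add: mult_left_mono)
  qed
  also have "(\<Sum>k<n. rho n k * M) = real n / 2 * M" by (simp add: sum_distrib_right[symmetric] rho_sum[OF n])
  finally show ?thesis by (simp add: algebra_simps)
qed

lemma cs_real: fixes p q r s :: real shows "p * r + q * s \<le> sqrt (p^2 + q^2) * sqrt (r^2 + s^2)"
proof -
  have "(p * r + q * s)^2 \<le> (p^2 + q^2) * (r^2 + s^2)"
  proof -
    have "0 \<le> (p * s - q * r)^2" by simp
    then show ?thesis by (simp add: power2_eq_square algebra_simps)
  qed
  then have "\<bar>p * r + q * s\<bar> \<le> sqrt ((p^2 + q^2) * (r^2 + s^2))"
    using real_le_rsqrt by (metis real_sqrt_abs real_sqrt_le_mono)
  then show ?thesis by (simp add: real_sqrt_mult)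
qed

lemma cs_complex: "cmod (cnj a * x + cnj b * y) \<le> sqrt ((cmod a)^2 + (cmod b)^2) * sqrt ((cmod x)^2 + (cmod y)^2)"
proof -
  have "cmod (cnj a * x + cnj b * y) \<le> cmod a * cmod x + cmod b * cmod y"
    by (metis complex_mod_cnj norm_mult norm_triangle_ineq)
  also have "\<dots> \<le> sqrt ((cmod a)^2 + (cmod b)^2) * sqrt ((cmod x)^2 + (cmod y)^2)" by (rule cs_real)
  finally show ?thesis .
qed

lemma g_bound: "cmod (cnj (c1 V) * c1 W + cnj (c2 V) * c2 W) \<le> norm V * norm W"
  unfolding norm_c12[of V] norm_c12[of W] by (rule cs_complex)

lemma g_self: "cnj (c1 V) * c1 V + cnj (c2 V) * c2 V = complex_of_real ((norm V)^2)"
proof -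
  have "(norm V)^2 = (cmod (c1 V))^2 + (cmod (c2 V))^2" unfolding norm_c12 by simp
  then have "complex_of_real ((norm V)^2) = complex_of_real ((cmod (c1 V))^2) + complex_of_real ((cmod (c2 V))^2)"
    by (simp only: of_real_add)
  then show ?thesis unfolding complex_norm_square by (simp only: ac_simps)
qed

lemma mm_frontier:
  assumes h1: "f1 holomorphic_on UNIV" and h2: "f2 holomorphic_on UNIV"
    and D1: "\<And>z. c1 (D z) = f1 z" and D2: "\<And>z. c2 (D z) = f2 z"
    and K: "\<And>z. cmod z = 1 \<Longrightarrow> norm (D z) \<le> K" and z0: "cmod z0 \<le> 1"
  shows "norm (D z0) \<le> K"
proof -
  define V where "V = D z0"
  define g where "g z = cnj (c1 V) * f1 z + cnj (c2 V) * f2 z" for z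
  have hg: "g holomorphic_on UNIV" unfolding g_def using h1 h2 by (intro holomorphic_intros) auto
  have gb: "cmod (g z) \<le> norm V * norm (D z)" for z
    unfolding g_def D1[symmetric] D2[symmetric] by (rule g_bound)
  have gz0: "g z0 = complex_of_real ((norm V)^2)"
    unfolding g_def D1[symmetric] D2[symmetric] V_def by (rule g_self)
  have K0: "K \<ge> 0" using K[of 1] by (meson norm_ge_zero norm_one order.trans)
  have "cmod (g z0) \<le> norm V * K"
  proof (rule maximum_modulus_frontier[of g "cball 0 1"])
    show "g holomorphic_on interior (cball 0 1)" using hg by (rule holomorphic_on_subset) auto
    show "continuous_on (closure (cball 0 1)) g"
      using hg holomorphic_on_imp_continuous_on continuous_on_subset by blast
    show "bounded (cball (0::complex) 1)" by simp
    show "z0 \<in> cball 0 1" using z0 by simp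
    fix z assume "z \<in> frontier (cball (0::complex) 1)"
    then have "cmod z = 1" by (simp add: frontier_cball)
    then show "cmod (g z) \<le> norm V * K"
      using gb[of z] K[of z] by (meson norm_ge_zero mult_left_mono order.trans)
  qed
  then have "(norm V)^2 \<le> norm V * K" unfolding gz0 by (simp add: norm_power)
  then have "norm V \<le> K" using K0
    by (cases "norm V = 0") (auto simp: power2_eq_square)
  then show ?thesis by (simp add: V_def)
qed

lemma mm_interior:
  assumes h1: "f1 holomorphic_on UNIV" and h2: "f2 holomorphic_on UNIV"
    and D1: "\<And>z. c1 (D z) = f1 z" and D2: "\<And>z. c2 (D z) = f2 z"
    and z0: "cmod z0 < 1" and mx: "\<And>z. cmod z \<le> 1 \<Longrightarrow> norm (D z) \<le> norm (D z0)"
  shows "norm (D z0) \<le> norm (D 1)"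
proof -
  define V where "V = D z0"
  define g where "g z = cnj (c1 V) * f1 z + cnj (c2 V) * f2 z" for z
  have hg: "g holomorphic_on UNIV" unfolding g_def using h1 h2 by (intro holomorphic_intros) auto
  have gb: "cmod (g z) \<le> norm V * norm (D z)" for z
    unfolding g_def D1[symmetric] D2[symmetric] by (rule g_bound)
  have gz0: "g z0 = complex_of_real ((norm V)^2)"
    unfolding g_def D1[symmetric] D2[symmetric] V_def by (rule g_self)
  have "g constant_on UNIV"
  proof (rule maximum_modulus_principle[of g UNIV "ball 0 1" z0])
    show "g holomorphic_on UNIV" by (rule hg)
    show "z0 \<in> ball 0 1" using z0 by simp
    fix z :: complex assume "z \<in> ball 0 1"
    then have "cmod z \<le> 1" by simp
    then have "cmod (g z) \<le> norm V * norm V"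
      using gb[of z] mx[of z] unfolding V_def by (meson norm_ge_zero mult_left_mono order.trans)
    then show "cmod (g z) \<le> cmod (g z0)" unfolding gz0 by (simp add: power2_eq_square norm_mult)
  qed auto
  then have "g 1 = g z0" unfolding constant_on_def by auto
  then have "(norm V)^2 \<le> norm V * norm (D 1)" using gb[of 1] gz0 by (simp add: norm_power)
  then have "norm V \<le> norm (D 1)"
    by (cases "norm V = 0") (auto simp: power2_eq_square)
  then show ?thesis by (simp add: V_def)
qed

lemma c1_slpow: "c1 (sl u ^ j * q) = u ^ j * c1 q"
proof -
  have "sl u ^ j = sl (u ^ j)" by (rule sl_pow[symmetric])
  then show ?thesis by (simp only: c1_slmult)
qed
lemma c2_slpow: "c2 (sl u ^ j * q) = u ^ j * c2 q"
proof -
  have "sl u ^ j = sl (u ^ j)" by (rule sl_pow[symmetric])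
  then show ?thesis by (simp only: c2_slmult)
qed

lemma sl_uminus: "sl (- z) = - sl z" by (rule quat_eqI) simp_all

lemma sum_helper:
  fixes z v e :: complex and c :: "nat \<Rightarrow> complex"
  shows "(\<Sum>j\<le>n. (z ^ j * c j - (if j = n then e else 0)) * v ^ j) = (\<Sum>j\<le>n. (z * v) ^ j * c j) - e * v ^ n"
proof -
  have "(\<Sum>j\<le>n. (z ^ j * c j - (if j = n then e else 0)) * v ^ j)
      = (\<Sum>j\<le>n. (z * v) ^ j * c j) - (\<Sum>j\<le>n. (if j = n then e * v ^ j else 0))"
    unfolding sum_subtractf[symmetric] by (rule sum.cong[OF refl]) (simp add: power_mult_distrib algebra_simps)
  also have "(\<Sum>j\<le>n. (if j = n then e * v ^ j else 0)) = e * v ^ n" by simp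
  finally show ?thesis .
qed

lemma coeff_vanish:
  fixes cc :: "quat \<Rightarrow> complex"
  assumes ccm: "\<And>u j q. cc (sl u ^ j * q) = u ^ j * cc q"
    and ccs: "\<And>f (A::nat set). cc (sum f A) = (\<Sum>x\<in>A. cc (f x))"
    and z0: "z \<noteq> 0"
    and vals: "\<And>v. v \<in> N \<Longrightarrow> spoly a n (sl (z * v)) = sl v ^ n * E"
    and fin: "finite N" and cardN: "card N > n"
  shows "\<And>j. j < n \<Longrightarrow> cc (a j) = 0"
proof -
  define cf where "cf j = z ^ j * cc (a j) - (if j = n then cc E else 0)" for j
  have allv: "(\<Sum>j\<le>n. cf j * v ^ j) = 0" if "v \<in> N" for v
  proof -
    have e1: "cc (spoly a n (sl (z * v))) = (\<Sum>j\<le>n. cc (sl (z * v) ^ j * a j))"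
      unfolding spoly_eq atLeast0AtMost by (rule ccs)
    have e2: "(\<Sum>j\<le>n. cc (sl (z * v) ^ j * a j)) = (\<Sum>j\<le>n. (z * v) ^ j * cc (a j))"
      by (rule sum.cong[OF refl]) (rule ccm)
    have e3: "cc (spoly a n (sl (z * v))) = v ^ n * cc E" unfolding vals[OF that] by (rule ccm)
    have "(\<Sum>j\<le>n. (z * v) ^ j * cc (a j)) = (\<Sum>j\<le>n. cc (sl (z * v) ^ j * a j))" by (rule e2[symmetric])
    also have "\<dots> = cc (spoly a n (sl (z * v)))" by (rule e1[symmetric])
    also have "\<dots> = v ^ n * cc E" by (rule e3)
    finally have e: "(\<Sum>j\<le>n. (z * v) ^ j * cc (a j)) = v ^ n * cc E" .
    have "(\<Sum>j\<le>n. cf j * v ^ j) = (\<Sum>j\<le>n. (z * v) ^ j * cc (a j)) - cc E * v ^ n"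
      unfolding cf_def by (rule sum_helper)
    also have "\<dots> = 0" unfolding e by simp
    finally show ?thesis .
  qed
  have cf0: "cf j = 0" if "j \<le> n" for j using coeffs_zero[OF fin cardN allv that] .
  fix j assume "j < n"
  then have "z ^ j * cc (a j) = 0" using cf0[of j] unfolding cf_def by simp
  then show "cc (a j) = 0" using z0 by simp
qed

lemma collinear_eq:
  fixes X V :: quat
  assumes "norm X \<le> M" "inner X V = real n * M^2" "norm V = real n * M" "n \<ge> 1"
  shows "X = (1 / real n) *\<^sub>R V"
proof -
  have n0: "real n > 0" using assms by simp
  have "(norm (X - (1 / real n) *\<^sub>R V))^2 = (norm X)^2 - 2 * (1 / real n) * inner X V + (1 / real n)^2 * (norm V)^2"
    unfolding power2_norm_eq_inner by (simp add: inner_diff_left inner_diff_right inner_commute algebra_simps power2_eq_square)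
  also have "\<dots> = (norm X)^2 - M^2"
    using n0 unfolding assms(2,3) by (simp add: field_simps power2_eq_square)
  also have "\<dots> \<le> 0" using assms(1) by (simp add: abs_le_square_iff[symmetric])
  finally show ?thesis by simp
qed

lemma eq_boundary:
  assumes n: "n \<ge> 1" and z: "cmod z = 1"
    and M: "\<And>v. cmod v \<le> 1 \<Longrightarrow> norm (spoly a n (sl v)) \<le> M"
    and eq: "norm (spoly_deriv a n (sl z)) = real n * M"
  shows "\<And>j. j < n \<Longrightarrow> a j = 0"
proof -
  have "norm (spoly a n (sl 0)) \<le> M" by (rule M) simp
  then have M0: "M \<ge> 0" by (meson norm_ge_zero order.trans)
  define V where "V = sl z * spoly_deriv a n (sl z)"
  define X0 where "X0 = spoly a n (sl z)"
  define X where "X k = - spoly a n (sl (z * wn n k))" for k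
  have nV: "norm V = real n * M" unfolding V_def by (simp add: norm_mult z eq)
  have hV: "V = (real n / 2) *\<^sub>R X0 + (\<Sum>k<n. rho n k *\<^sub>R X k)"
    unfolding V_def interp_quat[OF n] X0_def X_def by (simp add: sum_negf)
  have nX0: "norm X0 \<le> M" unfolding X0_def using M[of z] z by simp
  have nX: "norm (X k) \<le> M" for k
  proof -
    have "cmod (z * wn n k) = 1" using z by (simp add: norm_mult wn_def)
    then show ?thesis unfolding X_def using M[of "z * wn n k"] by simp
  qed
  have ciX0: "inner X0 V \<le> real n * M^2"
    using norm_cauchy_schwarz[of X0 V] nX0 nV M0 n
    by (smt (verit) mult_right_mono norm_ge_zero power2_eq_square mult.assoc mult.left_commute)
  have ciX: "inner (X k) V \<le> real n * M^2" for k
    using norm_cauchy_schwarz[of "X k" V] nX[of k] nV M0 n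
    by (smt (verit) mult_right_mono norm_ge_zero power2_eq_square mult.assoc mult.left_commute)
  define d0 where "d0 = real n * M^2 - inner X0 V"
  define d where "d k = real n * M^2 - inner (X k) V" for k
  have d0p: "d0 \<ge> 0" using ciX0 unfolding d0_def by simp
  have dp: "d k \<ge> 0" for k using ciX[of k] unfolding d_def by simp
  have rd: "rho n k * d k \<ge> 0" for k using dp[of k] rho_pos[OF n, of k] by simp
  have "inner V V = (real n / 2) * inner X0 V + (\<Sum>k<n. rho n k * inner (X k) V)"
    by (subst (1) hV) (simp add: inner_add_left inner_sum_left)
  also have "\<dots> = (real n / 2 + (\<Sum>k<n. rho n k)) * (real n * M^2) - ((real n / 2) * d0 + (\<Sum>k<n. rho n k * d k))"
    unfolding d0_def d_def by (simp add: algebra_simps sum_subtractf sum_distrib_left sum_distrib_right)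
  finally have "(real n / 2) * d0 + (\<Sum>k<n. rho n k * d k) = 0"
    unfolding rho_sum[OF n] using nV by (simp add: power2_norm_eq_inner[symmetric] power_mult_distrib power2_eq_square)
  moreover have "(\<Sum>k<n. rho n k * d k) \<ge> 0" using rd by (intro sum_nonneg) simp
  moreover have "(real n / 2) * d0 \<ge> 0" using d0p by simp
  ultimately have s1: "(real n / 2) * d0 = 0" and s2: "(\<Sum>k<n. rho n k * d k) = 0" by linarith+
  have "d0 = 0" using s1 n by simp
  have "\<forall>k\<in>{..<n}. rho n k * d k = 0"
    using s2 by (subst (asm) sum_nonneg_eq_0_iff) (auto intro: rd)
  then have dk0: "d k = 0" if "k < n" for k
  proof -
    from \<open>\<forall>k\<in>{..<n}. rho n k * d k = 0\<close> that have "rho n k * d k = 0" by blast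
    then show ?thesis using rho_pos[OF n, of k] by simp
  qed
  define E where "E = (1 / real n) *\<^sub>R V"
  have eX0: "X0 = E" unfolding E_def
    by (rule collinear_eq[OF nX0 _ nV n]) (use \<open>d0 = 0\<close> d0_def in simp)
  have eX: "X k = E" if "k < n" for k unfolding E_def
    by (rule collinear_eq[OF nX[of k] _ nV n]) (use dk0[OF that] d_def in simp)
  define N where "N = insert 1 (wn n ` {..<n})"
  have finN: "finite N" unfolding N_def by simp
  have cardN: "card N > n"
  proof -
    have "1 \<notin> wn n ` {..<n}" using wn_ne_1[OF n] by auto
    moreover have "inj_on (wn n) {..<n}" by (rule inj_onI) (use wn_inj[OF n] in auto)
    ultimately show ?thesis unfolding N_def by (simp add: card_image)
  qed
  have vals: "spoly a n (sl (z * v)) = sl v ^ n * E" if vN: "v \<in> N" for v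
  proof (cases "v = 1")
    case True then show ?thesis using eX0 unfolding X0_def by simp
  next
    case False
    then obtain k where k: "k < n" "v = wn n k" using vN unfolding N_def by auto
    have "spoly a n (sl (z * v)) = - X k" unfolding X_def k by simp
    also have "\<dots> = - E" using eX[OF k(1)] by simp
    also have "\<dots> = sl v ^ n * E"
    proof -
      have "sl v ^ n = sl (v ^ n)" by (rule sl_pow[symmetric])
      also have "\<dots> = sl (-1)" unfolding k by (simp only: wn_pow_n[OF n])
      also have "\<dots> = -1" by (simp add: sl_uminus)
      finally show ?thesis by simp
    qed
    finally show ?thesis .
  qed
  have z0: "z \<noteq> 0" using z by auto
  fix j assume j: "j < n"
  have "c1 (a j) = 0"
    by (rule coeff_vanish[OF c1_slpow c1_sum z0 vals finN cardN j]) auto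
  moreover have "c2 (a j) = 0"
    by (rule coeff_vanish[OF c2_slpow c2_sum z0 vals finN cardN j]) auto
  ultimately show "a j = 0" by (rule c12_zero)
qed

lemma c1_spoly_deriv: "c1 (spoly_deriv a n (sl z)) = (\<Sum>j\<in>{1..n}. z ^ (j - 1) * (complex_of_real (real j) * c1 (a j)))"
  unfolding spoly_deriv_eq c1_sum by (simp add: c1_slpow c1_scaleR mult_ac)
lemma c2_spoly_deriv: "c2 (spoly_deriv a n (sl z)) = (\<Sum>j\<in>{1..n}. z ^ (j - 1) * (complex_of_real (real j) * c2 (a j)))"
  unfolding spoly_deriv_eq c2_sum by (simp add: c2_slpow c2_scaleR mult_ac)

lemma slice_bound:
  assumes n: "n \<ge> 1" and M: "\<And>v. cmod v \<le> 1 \<Longrightarrow> norm (spoly a n (sl v)) \<le> M"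
    and z0: "cmod z0 \<le> 1"
  shows "norm (spoly_deriv a n (sl z0)) \<le> real n * M"
proof (rule mm_frontier[of "\<lambda>z. (\<Sum>j\<in>{1..n}. z ^ (j - 1) * (complex_of_real (real j) * c1 (a j)))"
      "\<lambda>z. (\<Sum>j\<in>{1..n}. z ^ (j - 1) * (complex_of_real (real j) * c2 (a j)))" "\<lambda>z. spoly_deriv a n (sl z)"])
  show "(\<lambda>z. \<Sum>j = 1..n. z ^ (j - 1) * (complex_of_real (real j) * c1 (a j))) holomorphic_on UNIV"
    by (intro holomorphic_intros)
  show "(\<lambda>z. \<Sum>j = 1..n. z ^ (j - 1) * (complex_of_real (real j) * c2 (a j))) holomorphic_on UNIV"
    by (intro holomorphic_intros)
  show "\<And>z. c1 (spoly_deriv a n (sl z)) = (\<Sum>j = 1..n. z ^ (j - 1) * (complex_of_real (real j) * c1 (a j)))"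
    by (rule c1_spoly_deriv)
  show "\<And>z. c2 (spoly_deriv a n (sl z)) = (\<Sum>j = 1..n. z ^ (j - 1) * (complex_of_real (real j) * c2 (a j)))"
    by (rule c2_spoly_deriv)
  show "\<And>z. cmod z = 1 \<Longrightarrow> norm (spoly_deriv a n (sl z)) \<le> real n * M"
    using bound_boundary[OF n _ M] by blast
qed (rule z0)

lemma slice_eq:
  assumes n: "n \<ge> 1" and M: "\<And>v. cmod v \<le> 1 \<Longrightarrow> norm (spoly a n (sl v)) \<le> M"
    and z0: "cmod z0 \<le> 1" and eq: "norm (spoly_deriv a n (sl z0)) = real n * M"
  shows "\<And>j. j < n \<Longrightarrow> a j = 0"
proof -
  fix j assume j: "j < n"
  show "a j = 0"
  proof (cases "cmod z0 = 1")
    case True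
    show ?thesis by (rule eq_boundary[OF n True M eq j])
  next
    case False
    then have lt: "cmod z0 < 1" using z0 by simp
    have "norm (spoly_deriv a n (sl z0)) \<le> norm (spoly_deriv a n (sl 1))"
    proof (rule mm_interior[of "\<lambda>z. (\<Sum>j\<in>{1..n}. z ^ (j - 1) * (complex_of_real (real j) * c1 (a j)))"
      "\<lambda>z. (\<Sum>j\<in>{1..n}. z ^ (j - 1) * (complex_of_real (real j) * c2 (a j)))" "\<lambda>z. spoly_deriv a n (sl z)"])
      show "(\<lambda>z. \<Sum>j = 1..n. z ^ (j - 1) * (complex_of_real (real j) * c1 (a j))) holomorphic_on UNIV"
        by (intro holomorphic_intros)
      show "(\<lambda>z. \<Sum>j = 1..n. z ^ (j - 1) * (complex_of_real (real j) * c2 (a j))) holomorphic_on UNIV"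
        by (intro holomorphic_intros)
      show "\<And>z. c1 (spoly_deriv a n (sl z)) = (\<Sum>j = 1..n. z ^ (j - 1) * (complex_of_real (real j) * c1 (a j)))"
        by (rule c1_spoly_deriv)
      show "\<And>z. c2 (spoly_deriv a n (sl z)) = (\<Sum>j = 1..n. z ^ (j - 1) * (complex_of_real (real j) * c2 (a j)))"
        by (rule c2_spoly_deriv)
      show "\<And>z. cmod z \<le> 1 \<Longrightarrow> norm (spoly_deriv a n (sl z)) \<le> norm (spoly_deriv a n (sl z0))"
        using slice_bound[OF n M] eq by simp
    qed (rule lt)
    moreover have "norm (spoly_deriv a n (sl 1)) \<le> real n * M" by (rule slice_bound[OF n M]) auto
    ultimately have e1: "norm (spoly_deriv a n (sl 1)) = real n * M" using eq by simp
    have c1: "cmod (1::complex) = 1" by simp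
    show ?thesis by (rule eq_boundary[OF n c1 M e1 j])
  qed
qed

definition cj :: "quat \<Rightarrow> quat \<Rightarrow> quat" where "cj r q = r * q * inverse r"

lemma cj_mult: assumes "r \<noteq> 0" shows "cj r (p * q) = cj r p * cj r q"
proof -
  have "r * p * inverse r * (r * q * inverse r) = r * p * (inverse r * r) * q * inverse r" by (simp only: mult.assoc)
  also have "\<dots> = r * (p * q) * inverse r" using assms by (simp add: mult.assoc)
  finally show ?thesis unfolding cj_def by simp
qed
lemma cj_one: "r \<noteq> 0 \<Longrightarrow> cj r 1 = 1" unfolding cj_def by simp
lemma cj_pow: "r \<noteq> 0 \<Longrightarrow> cj r (q ^ j) = cj r q ^ j"
  by (induct j) (simp_all add: cj_one cj_mult)
lemma cj_sum: "cj r (sum f A) = (\<Sum>x\<in>A. cj r (f x))"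
  unfolding cj_def by (simp add: sum_distrib_left sum_distrib_right)
lemma cj_scaleR: "cj r (t *\<^sub>R q) = t *\<^sub>R cj r q" unfolding cj_def by simp
lemma cj_zero: "cj r 0 = 0" unfolding cj_def by simp
lemma norm_cj: "r \<noteq> 0 \<Longrightarrow> norm (cj r q) = norm q"
  unfolding cj_def by (simp add: norm_mult norm_inverse)
lemma cj_inv: assumes "r \<noteq> 0" shows "cj (inverse r) (cj r q) = q"
proof -
  have "inverse r * (r * q * inverse r) * inverse (inverse r) = (inverse r * r) * q * (inverse r * r)"
    by (simp only: mult.assoc inverse_inverse_eq)
  also have "\<dots> = q" using assms by simp
  finally show ?thesis unfolding cj_def .
qed

lemma cj_spoly: "r \<noteq> 0 \<Longrightarrow> spoly (\<lambda>j. cj r (a j)) n (cj r q) = cj r (spoly a n q)"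
  unfolding spoly_eq cj_sum by (simp add: cj_mult cj_pow)
lemma cj_spoly_deriv: "r \<noteq> 0 \<Longrightarrow> spoly_deriv (\<lambda>j. cj r (a j)) n (cj r q) = cj r (spoly_deriv a n q)"
  unfolding spoly_deriv_eq cj_sum by (simp add: cj_mult cj_pow cj_scaleR)

lemma rotate_to_slice: "\<exists>r z. r \<noteq> 0 \<and> cj r q = sl z \<and> cmod z = norm q"
proof (cases "Im2 q = 0 \<and> Im3 q = 0")
  case True
  define z where "z = Complex (Defs.Re q) (Im1 q)"
  have "cj 1 q = sl z" unfolding cj_def z_def using True by (intro quat_eqI) simp_all
  moreover have "cmod z = norm q" unfolding z_def using True
    by (simp add: norm_quat_def qnorm_def cmod_def)
  ultimately show ?thesis by (intro exI[of _ 1] exI[of _ z]) simp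
next
  case False
  define s where "s = sqrt ((Im1 q)^2 + (Im2 q)^2 + (Im3 q)^2)"
  have s2: "s * s = (Im1 q)^2 + (Im2 q)^2 + (Im3 q)^2" unfolding s_def
    by (simp add: add_nonneg_nonneg)
  define r where "r = Quat (s + Im1 q) 0 (Im3 q) (- Im2 q)"
  define z where "z = Complex (Defs.Re q) s"
  have r0: "r \<noteq> 0" unfolding r_def using False by (auto simp: quat_eq_iff)
  have rq: "r * q = sl z * r" unfolding r_def z_def
    by (rule quat_eqI) (simp_all add: algebra_simps power2_eq_square s2)
  have "cj r q = sl z" unfolding cj_def rq using r0 by (simp add: mult.assoc)
  moreover have "cmod z = norm q" unfolding z_def
    by (simp add: norm_quat_def qnorm_def cmod_def power2_eq_square s2 add.assoc)
  ultimately show ?thesis using r0 by blast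
qed

definition tq :: "complex \<times> complex \<Rightarrow> quat" where "tq p = sl (fst p) + sl (snd p) * Quat 0 0 1 0"

lemma c1_tq [simp]: "c1 (tq p) = fst p" by (simp add: tq_def complex_eq_iff)
lemma c2_tq [simp]: "c2 (tq p) = snd p" by (simp add: tq_def complex_eq_iff)
lemma norm_tq: "norm (tq p) = norm p"
  by (cases p) (simp add: norm_c12 norm_Pair)
lemma tq_c12: "tq (c1 q, c2 q) = q" by (rule quat_eqI) (simp_all add: tq_def)

lemma bl_tq: "bounded_linear tq"
proof (rule bounded_linear_intro[where K = 1])
  show "tq (x + y) = tq x + tq y" for x y by (rule quat_eqI) (simp_all add: tq_def)
  show "tq (r *\<^sub>R x) = r *\<^sub>R tq x" for r x by (rule quat_eqI) (simp_all add: tq_def)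
  show "norm (tq x) \<le> norm x * 1" for x by (simp add: norm_tq)
qed

lemma compact_ball_quat: "compact {q :: quat. norm q \<le> 1}"
proof -
  have "{q :: quat. norm q \<le> 1} = tq ` cball 0 1"
  proof (intro set_eqI iffI)
    fix q :: quat assume "q \<in> {q. norm q \<le> 1}"
    then have "norm (c1 q, c2 q) \<le> 1" using norm_tq[of "(c1 q, c2 q)"] by (simp add: tq_c12)
    then show "q \<in> tq ` cball 0 1" by (metis tq_c12 image_eqI mem_cball_0)
  next
    fix q assume "q \<in> tq ` cball 0 1"
    then show "q \<in> {q. norm q \<le> 1}" by (auto simp: norm_tq)
  qed
  moreover have "compact (tq ` cball 0 1)"
    by (intro compact_continuous_image linear_continuous_on bl_tq compact_cball)
  ultimately show ?thesis by simp
qed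

lemma sup_attained: "x0 \<in> S \<Longrightarrow> (\<And>x. x \<in> S \<Longrightarrow> f x \<le> f x0) \<Longrightarrow> (SUP x\<in>S. f x) = (f x0 :: real)"
  by (rule cSup_eq_maximum) auto

lemma spoly_mono: assumes "\<And>j. j < n \<Longrightarrow> a j = 0" shows "spoly a n q = q ^ n * a n"
proof -
  have "spoly a n q = q ^ n * a n + (\<Sum>j\<in>{0..n} - {n}. q ^ j * a j)"
    unfolding spoly_eq by (rule sum.remove) auto
  also have "(\<Sum>j\<in>{0..n} - {n}. q ^ j * a j) = 0" by (rule sum.neutral) (auto simp: assms)
  finally show ?thesis by simp
qed

lemma spoly_deriv_mono: assumes "\<And>j. j < n \<Longrightarrow> a j = 0" "n \<ge> 1"
  shows "spoly_deriv a n q = q ^ (n - 1) * (real n *\<^sub>R a n)"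
proof -
  have "spoly_deriv a n q = q ^ (n - 1) * (real n *\<^sub>R a n) + (\<Sum>j\<in>{1..n} - {n}. q ^ (j - 1) * (real j *\<^sub>R a j))"
    unfolding spoly_deriv_eq by (rule sum.remove) (use assms in auto)
  also have "(\<Sum>j\<in>{1..n} - {n}. q ^ (j - 1) * (real j *\<^sub>R a j)) = 0" by (rule sum.neutral) (auto simp: assms)
  finally show ?thesis by simp
qed

lemma rotated_bound:
  assumes r: "r \<noteq> 0" and M: "\<And>q. norm q \<le> 1 \<Longrightarrow> norm (spoly a n q) \<le> M"
  shows "\<And>v. cmod v \<le> 1 \<Longrightarrow> norm (spoly (\<lambda>j. cj r (a j)) n (sl v)) \<le> M"
proof -
  fix v :: complex assume v: "cmod v \<le> 1"
  define w where "w = cj (inverse r) (sl v)"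
  have ri: "inverse r \<noteq> 0" using r by simp
  have "cj r w = sl v" unfolding w_def using cj_inv[OF ri, of "sl v"] r by simp
  then have "spoly (\<lambda>j. cj r (a j)) n (sl v) = cj r (spoly a n w)" using cj_spoly[OF r] by metis
  then have "norm (spoly (\<lambda>j. cj r (a j)) n (sl v)) = norm (spoly a n w)" by (simp add: norm_cj[OF r])
  also have "\<dots> \<le> M" using M[of w] v unfolding w_def by (simp add: norm_cj[OF ri])
  finally show "norm (spoly (\<lambda>j. cj r (a j)) n (sl v)) \<le> M" .
qed

theorem theorem1p1:
  fixes a :: "nat \<Rightarrow> quat" and n :: nat
  assumes "a n \<noteq> qzero"
  shows "unit_ball_norm (spoly_deriv a n) \<le> real n * unit_ball_norm (spoly a n)
    \<and> (unit_ball_norm (spoly_deriv a n) = real n * unit_ball_norm (spoly a n)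
         \<longleftrightarrow> (\<exists>c. \<forall>q. spoly a n q = qmult (qpow q n) c))"
proof -
  define B where "B = {q :: quat. norm q \<le> 1}"
  define M where "M = unit_ball_norm (spoly a n)"
  define Md where "Md = unit_ball_norm (spoly_deriv a n)"
  have Mdef: "M = (SUP q\<in>B. norm (spoly a n q))" unfolding M_def B_def ubn_eq ..
  have Mddef: "Md = (SUP q\<in>B. norm (spoly_deriv a n q))" unfolding Md_def B_def ubn_eq ..
  have B1: "1 \<in> B" unfolding B_def by simp
  have Bne: "B \<noteq> {}" using B1 by blast
  have bdd: "bdd_above ((\<lambda>q. norm (spoly a n q)) ` B)"
  proof (rule bdd_aboveI2)
    fix q assume "q \<in> B"
    then have q: "norm q \<le> 1" unfolding B_def by simp
    have "norm (spoly a n q) \<le> (\<Sum>j\<in>{0..n}. norm (q ^ j * a j))" unfolding spoly_eq by (rule norm_sum)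
    also have "\<dots> \<le> (\<Sum>j\<in>{0..n}. norm (a j))"
    proof (rule sum_mono)
      fix j
      have "norm q ^ j \<le> 1" using q by (simp add: power_le_one)
      then show "norm (q ^ j * a j) \<le> norm (a j)"
        by (simp add: norm_mult norm_power mult_left_le_one_le)
    qed
    finally show "norm (spoly a n q) \<le> (\<Sum>j\<in>{0..n}. norm (a j))" .
  qed
  have PM: "norm (spoly a n q) \<le> M" if "norm q \<le> 1" for q
    unfolding Mdef using that bdd by (intro cSUP_upper) (auto simp: B_def)
  have DM: "norm (spoly_deriv a n q) \<le> real n * M" if "norm q \<le> 1" for q
  proof (cases "n = 0")
    case True then show ?thesis by (simp add: spoly_deriv_eq)
  next
    case False
    then have n: "n \<ge> 1" by simp
    obtain r z where rz: "r \<noteq> 0" "cj r q = sl z" "cmod z = norm q" using rotate_to_slice by blast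
    have "norm (spoly_deriv (\<lambda>j. cj r (a j)) n (sl z)) \<le> real n * M"
      by (rule slice_bound[OF n rotated_bound[OF rz(1) PM]]) (use rz that in auto)
    moreover have "spoly_deriv (\<lambda>j. cj r (a j)) n (sl z) = cj r (spoly_deriv a n q)"
      using cj_spoly_deriv[OF rz(1)] rz(2) by metis
    ultimately show ?thesis by (simp add: norm_cj[OF rz(1)])
  qed
  have part1: "Md \<le> real n * M"
    unfolding Mddef by (rule cSUP_least[OF Bne]) (use DM B_def in auto)
  have part2: "Md = real n * M \<longleftrightarrow> (\<exists>c. \<forall>q. spoly a n q = qmult (qpow q n) c)"
  proof
    assume eq: "Md = real n * M"
    show "\<exists>c. \<forall>q. spoly a n q = qmult (qpow q n) c"
    proof (cases "n = 0")
      case True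
      then show ?thesis by (intro exI[of _ "a 0"]) (simp add: spoly_eq qmult_eq qpow_eq)
    next
      case False
      then have n: "n \<ge> 1" by simp
      have cont: "continuous_on B (\<lambda>q. norm (spoly_deriv a n q))"
        unfolding spoly_deriv_eq by (intro continuous_intros)
      obtain qs where qs: "qs \<in> B" "\<And>q. q \<in> B \<Longrightarrow> norm (spoly_deriv a n q) \<le> norm (spoly_deriv a n qs)"
        using continuous_attains_sup[OF compact_ball_quat[folded B_def] Bne cont] by blast
      have "Md = norm (spoly_deriv a n qs)" unfolding Mddef by (rule sup_attained[of qs B "\<lambda>q. norm (spoly_deriv a n q)"]) (use qs in auto)
      then have eqs: "norm (spoly_deriv a n qs) = real n * M" using eq by simp
      obtain r z where rz: "r \<noteq> 0" "cj r qs = sl z" "cmod z = norm qs" using rotate_to_slice by blast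
      have z1: "cmod z \<le> 1" using rz qs B_def by simp
      have "spoly_deriv (\<lambda>j. cj r (a j)) n (sl z) = cj r (spoly_deriv a n qs)"
        using cj_spoly_deriv[OF rz(1)] rz(2) by metis
      then have "norm (spoly_deriv (\<lambda>j. cj r (a j)) n (sl z)) = real n * M"
        using eqs by (simp add: norm_cj[OF rz(1)])
      from slice_eq[OF n rotated_bound[OF rz(1) PM] z1 this]
      have "cj r (a j) = 0" if "j < n" for j using that by blast
      then have a0: "a j = 0" if "j < n" for j
        using that norm_cj[OF rz(1), of "a j"] by (metis norm_eq_zero)
      show ?thesis
        by (intro exI[of _ "a n"] allI) (simp add: spoly_mono[of n a, OF a0] qmult_eq qpow_eq)
    qed
  next
    assume "\<exists>c. \<forall>q. spoly a n q = qmult (qpow q n) c"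
    then obtain c where c: "\<And>q. spoly a n q = q ^ n * c" by (auto simp: qmult_eq qpow_eq)
    show "Md = real n * M"
    proof (cases "n = 0")
      case True
      then show ?thesis unfolding Mddef using Bne by (simp add: spoly_deriv_eq)
    next
      case False
      then have n: "n \<ge> 1" by simp
      define N where "N = (of_nat :: nat \<Rightarrow> complex) ` {..n}"
      have finN: "finite N" unfolding N_def by simp
      have cardN: "card N > n" unfolding N_def by (subst card_image) (auto simp: inj_on_def)
      have vals: "spoly a n (sl (1 * v)) = sl v ^ n * c" for v using c[of "sl v"] by simp
      have z0: "(1::complex) \<noteq> 0" by simp
      have a0: "a j = 0" if j: "j < n" for j
      proof (rule c12_zero)
        show "c1 (a j) = 0" by (rule coeff_vanish[OF c1_slpow c1_sum z0 vals finN cardN j])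
        show "c2 (a j) = 0" by (rule coeff_vanish[OF c2_slpow c2_sum z0 vals finN cardN j])
      qed
      have an: "a n = c" using spoly_mono[of n a 1, OF a0] c[of 1] by simp
      have "M = norm (spoly a n 1)" unfolding Mdef
      proof (rule sup_attained[OF B1])
        fix q assume "q \<in> B"
        then have "norm q ^ n \<le> 1" unfolding B_def by (simp add: power_le_one)
        then show "norm (spoly a n q) \<le> norm (spoly a n 1)"
          by (simp add: c norm_mult norm_power mult_left_le_one_le)
      qed
      then have Mc: "M = norm c" by (simp add: c)
      have "Md = norm (spoly_deriv a n 1)" unfolding Mddef
      proof (rule sup_attained[OF B1])
        fix q assume "q \<in> B"
        then have "norm q ^ (n - 1) \<le> 1" unfolding B_def by (simp add: power_le_one)
        then show "norm (spoly_deriv a n q) \<le> norm (spoly_deriv a n 1)"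
          by (simp add: spoly_deriv_mono[of n a, OF a0 n] norm_mult norm_power mult_left_le_one_le mult_left_mono)
      qed
      then show ?thesis by (simp add: Mc spoly_deriv_mono[of n a, OF a0 n] an)
    qed
  qed
  show ?thesis using part1 part2 unfolding M_def Md_def by blast
qed

end
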